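(* Let $\xi>0$ and let $V_\xi=\{x+iy:\ \frac{x^2}{\cosh^2\xi}+\frac{y^2}{\sinh^2\xi}<1\}$, the interior of the ellipse with foci $\pm1$. Let $f$ be the conformal map of the unit disc onto $V_\xi$ with $f(0)=0$ and $f'(0)>0$. Its Taylor coefficients vanish in even degrees, so one can write $f(z)=\sum_{n=0}^{\infty}A_n z^{2n+1}$. Then $$\sum_{n=0}^{\infty}A_n^2=\frac{2\sinh^2\xi\cosh^2\xi}{\sinh^2\xi+\cosh^2\xi}=\frac{\sinh^2 2\xi}{2\cosh 2\xi}$$ and $$\sum_{n=0}^{\infty}\Big(\sum_{j=0}^{n}A_jA_{n-j}\Big)^2=\frac{\sinh^4 2\xi}{2\cosh 4\xi}.$$
   Context: The paper parametrizes $\xi$ through $t\in(0,1)$ with $\mu(t)=2\xi$, where $\mu(t)=\frac{\pi K(1,\sqrt{1-t^2})}{2K(1,t)}$ and $K(z,t)=\int_0^z\frac{dx}{\sqrt{(1-x^2)(1-t^2x^2)}}$. In these terms the right-hand sides equal $\frac{\sinh^2\mu(t)}{2\cosh\mu(t)}$ and $\frac{\sinh^4\mu(t)}{2\cosh 2\mu(t)}$ respectively. *)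

theory Defs
  imports "HOL-Complex_Analysis.Complex_Analysis"
begin

definition ellipse_domain :: "real \<Rightarrow> complex set" where
  "ellipse_domain \<xi> = {z. (Re z)\<^sup>2 / (cosh \<xi>)\<^sup>2 + (Im z)\<^sup>2 / (sinh \<xi>)\<^sup>2 < 1}"

definition taylor_coeff :: "(complex \<Rightarrow> complex) \<Rightarrow> nat \<Rightarrow> complex" where
  "taylor_coeff f k = (deriv ^^ k) f 0 / of_nat (fact k)"

end

theory Submission
  imports Defs
begin

lemma mean_link:
  assumes r: "r > 0"
  shows "((\<lambda>z. \<Phi> z / z) has_contour_integral (2*pi*\<i>*m)) (circlepath 0 r) \<longleftrightarrow>
         ((\<lambda>t. \<Phi> (circlepath 0 r t)) has_integral m) {0..1}"
proof -
  have "((\<lambda>z. \<Phi> z / z) has_contour_integral (2*pi*\<i>*m)) (circlepath 0 r) \<longleftrightarrow>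
        ((\<lambda>t. (2*pi*\<i>) * \<Phi> (circlepath 0 r t)) has_integral (2*pi*\<i>*m)) {0..1}"
    unfolding has_contour_integral_def
  proof (intro has_integral_cong)
    fix x :: real assume x: "x \<in> {0..1}"
    have vd: "vector_derivative (circlepath 0 r) (at x within {0..1}) = 2 * pi * \<i> * r * exp(2 * of_real pi * \<i> * x)"
      using x by (intro vector_derivative_circlepath01) auto
    have cp: "circlepath 0 r x = r * exp(2 * of_real pi * \<i> * of_real x)" by (simp add: circlepath)
    show "\<Phi> (circlepath 0 r x) / circlepath 0 r x * vector_derivative (circlepath 0 r) (at x within {0..1}) =
          2 * pi * \<i> * \<Phi> (circlepath 0 r x)"
      unfolding vd using r by (subst (2) cp) (simp add: field_simps)
  qed
  also have "\<dots> \<longleftrightarrow> ((\<lambda>t. \<Phi> (circlepath 0 r t)) has_integral m) {0..1}"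
    by (subst has_integral_mult_right_iff) auto
  finally show ?thesis .
qed

lemma mean_value:
  assumes hol: "h holomorphic_on ball 0 1" and r: "0 < r" "r < 1"
  shows "((\<lambda>t. h (circlepath 0 r t)) has_integral h 0) {0..1}"
proof -
  have sub: "cball 0 r \<subseteq> ball (0::complex) 1" using r by auto
  have "((\<lambda>u. h u / (u - 0) ^ (Suc 0)) has_contour_integral ((2 * pi * \<i>) / (fact 0) * (deriv ^^ 0) h 0))
           (circlepath 0 r)"
    by (rule Cauchy_has_contour_integral_higher_derivative_circlepath)
       (use r sub in \<open>auto intro: holomorphic_on_subset[OF hol] continuous_on_subset[OF holomorphic_on_imp_continuous_on[OF hol]]\<close>)
  hence "((\<lambda>u. h u / u) has_contour_integral (2 * pi * \<i> * h 0)) (circlepath 0 r)" by simp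
  thus ?thesis using mean_link[OF r(1)] by blast
qed

lemma parseval:
  assumes hol: "g holomorphic_on ball 0 1" and r: "0 < r" "r < 1"
  shows "summable (\<lambda>k. norm (taylor_coeff g k) ^ 2 * r ^ (2*k))"
    and "((\<lambda>t. complex_of_real (norm (g (circlepath 0 r t)) ^ 2)) has_integral
           complex_of_real (\<Sum>k. norm (taylor_coeff g k) ^ 2 * r ^ (2*k))) {0..1}"
proof -
  define b where "b = taylor_coeff g"
  have ser: "(\<lambda>k. b k * w ^ k) sums g w" if "w \<in> ball 0 1" for w
    using holomorphic_power_series[OF hol that] by (simp add: b_def taylor_coeff_def)
  define \<rho> where "\<rho> = (1 + r) / 2"
  have "\<rho> < 1" "\<rho> > 0" using r by (auto simp: \<rho>_def)
  hence "of_real \<rho> \<in> ball (0::complex) 1" by (simp only: mem_ball_0 norm_of_real)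
  hence "(\<lambda>k. b k * (of_real \<rho>) ^ k) sums g (of_real \<rho>)" by (intro ser)
  hence "summable (\<lambda>k. b k * (of_real \<rho>) ^ k)" by (simp add: sums_iff)
  moreover have "norm (of_real r :: complex) < norm (of_real \<rho> :: complex)"
    using r by (simp only: norm_of_real) (simp add: \<rho>_def)
  ultimately have "summable (\<lambda>n. norm (b n * (of_real r :: complex) ^ n))" by (rule powser_insidea)
  hence abs: "summable (\<lambda>k. norm (b k) * r ^ k)" using r by (simp add: norm_mult norm_power)
  have sub: "cball 0 r \<subseteq> ball (0::complex) 1" using r by auto
  have cau: "((\<lambda>u. g u / u ^ (Suc k)) has_contour_integral (2 * pi * \<i> * b k)) (circlepath 0 r)" for k
  proof -
    have "((\<lambda>u. g u / (u - 0) ^ (Suc k)) has_contour_integral ((2 * pi * \<i>) / (fact k) * (deriv ^^ k) g 0))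
           (circlepath 0 r)"
      by (rule Cauchy_has_contour_integral_higher_derivative_circlepath)
         (use r sub in \<open>auto intro: holomorphic_on_subset[OF hol] continuous_on_subset[OF holomorphic_on_imp_continuous_on[OF hol]]\<close>)
    thus ?thesis by (simp add: b_def taylor_coeff_def)
  qed
  define T where "T = (\<lambda>k u. cnj (b k) * of_real (r ^ (2*k)) * (g u / u ^ (Suc k)))"
  define a where "a = (\<lambda>k. norm (b k) ^ 2 * r ^ (2*k))"
  have Tint: "(T k has_contour_integral (2*pi*\<i> * of_real (a k))) (circlepath 0 r)" for k
  proof -
    have "(T k has_contour_integral (cnj (b k) * of_real (r ^ (2*k)) * (2 * pi * \<i> * b k))) (circlepath 0 r)"
      unfolding T_def by (rule has_contour_integral_lmul[OF cau])
    moreover have "cnj (b k) * of_real (r ^ (2*k)) * (2 * pi * \<i> * b k) = 2*pi*\<i> * of_real (a k)"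
      using complex_norm_square[of "b k"] by (simp add: a_def mult_ac)
    ultimately show ?thesis by metis
  qed
  have psum: "((\<lambda>u. \<Sum>k<N. T k u) has_contour_integral (2*pi*\<i> * of_real (\<Sum>k<N. a k))) (circlepath 0 r)" for N
    using has_contour_integral_sum[of "{..<N}" T "\<lambda>k. 2*pi*\<i> * of_real (a k)" "circlepath 0 r", OF _ Tint]
    by (simp add: sum_distrib_left)
  have "bounded (g ` sphere 0 r)"
    by (intro compact_imp_bounded compact_continuous_image continuous_on_subset[OF holomorphic_on_imp_continuous_on[OF hol]])
       (use sub in auto)
  then obtain G where G: "G > 0" "\<And>u. u \<in> sphere 0 r \<Longrightarrow> norm (g u) \<le> G"
    unfolding bounded_pos by auto
  have Tb: "norm (T k u) \<le> (G / r) * (norm (b k) * r ^ k)" if "u \<in> sphere 0 r" for k u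
  proof -
    have nu: "norm u = r" using that r by simp
    have "norm (T k u) = norm (b k) * r ^ (2*k) * norm (g u) / r ^ Suc k"
      using r by (simp add: T_def norm_mult norm_divide norm_power nu)
    also have "\<dots> = norm (b k) * r ^ k * norm (g u) / r"
    proof -
      have e1: "r ^ (2*k) = r^k * r^k" by (simp add: mult_2 power_add)
      show ?thesis unfolding e1 power_Suc using r by (simp add: field_simps)
    qed
    also have "\<dots> \<le> norm (b k) * r ^ k * G / r"
      using r G(2)[OF that] by (intro divide_right_mono mult_left_mono) auto
    finally show ?thesis by (simp add: field_simps)
  qed
  have ul: "uniform_limit (sphere 0 r) (\<lambda>N u. \<Sum>k<N. T k u) (\<lambda>u. \<Sum>k. T k u) sequentially"
    by (rule Weierstrass_m_test[OF Tb]) (auto intro: summable_mult abs)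
  have integ: "\<forall>\<^sub>F n in sequentially. (\<lambda>u. \<Sum>k<n. T k u) contour_integrable_on circlepath 0 r"
    using psum has_contour_integral_integrable by (intro always_eventually) blast
  have lim: "(\<lambda>N. contour_integral (circlepath 0 r) (\<lambda>u. \<Sum>k<N. T k u)) \<longlonglongrightarrow>
              contour_integral (circlepath 0 r) (\<lambda>u. \<Sum>k. T k u)"
    by (rule contour_integral_uniform_limit_circlepath(2)[OF integ ul]) (use r in auto)
  have lv: "(\<Sum>k. T k u) = of_real (norm (g u) ^ 2) / u" if "u \<in> sphere 0 r" for u
  proof -
    have nu: "norm u = r" using that r by simp
    have u0: "u \<noteq> 0" using nu r by auto
    have uc: "u * cnj u = of_real (r^2)" using complex_norm_square[of u] nu by simp
    have "T k u = g u / u * cnj (b k * u ^ k)" for k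
    proof -
      have "of_real (r ^ (2*k)) = (u * cnj u) ^ k" by (simp add: uc power_mult)
      thus ?thesis using u0 by (simp add: T_def field_simps power_mult_distrib)
    qed
    hence "(\<Sum>k. T k u) = (\<Sum>k. g u / u * cnj (b k * u ^ k))" by simp
    also have "\<dots> = g u / u * cnj (g u)"
    proof -
      have "u \<in> ball 0 1" using nu r by simp
      from ser[OF this] have "(\<lambda>k. cnj (b k * u ^ k)) sums cnj (g u)" by (subst sums_cnj)
      thus ?thesis by (rule sums_unique[OF sums_mult, symmetric])
    qed
    also have "\<dots> = of_real (norm (g u) ^ 2) / u" using complex_norm_square[of "g u"] by simp
    finally show ?thesis .
  qed
  have CIeq: "contour_integral (circlepath 0 r) (\<lambda>u. \<Sum>k. T k u) =
        contour_integral (circlepath 0 r) (\<lambda>u. of_real (norm (g u) ^ 2) / u)"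
    by (rule contour_integral_eq) (use lv r in auto)
  have "(\<lambda>N. contour_integral (circlepath 0 r) (\<lambda>u. \<Sum>k<N. T k u)) = (\<lambda>N. 2*pi*\<i> * of_real (\<Sum>k<N. a k))"
    using psum contour_integral_unique by blast
  with lim CIeq have lim2: "(\<lambda>N. 2*pi*\<i> * of_real (\<Sum>k<N. a k)) \<longlonglongrightarrow>
        contour_integral (circlepath 0 r) (\<lambda>u. of_real (norm (g u) ^ 2) / u)" by simp
  define C where "C = contour_integral (circlepath 0 r) (\<lambda>u. of_real (norm (g u) ^ 2) / u) / (2*pi*\<i>)"
  have "(\<lambda>N. (2*pi*\<i> * of_real (\<Sum>k<N. a k)) / (2*pi*\<i>)) \<longlonglongrightarrow> C"
    unfolding C_def by (intro tendsto_divide lim2) auto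
  hence lim3: "(\<lambda>N. of_real (\<Sum>k<N. a k)) \<longlonglongrightarrow> C" by simp
  hence "(\<lambda>k. complex_of_real (a k)) sums C" unfolding sums_def by simp
  hence sa: "summable a" by (simp add: sums_iff)
  thus "summable (\<lambda>k. norm (taylor_coeff g k) ^ 2 * r ^ (2*k))" by (simp add: a_def b_def)
  have "(\<lambda>N. of_real (\<Sum>k<N. a k)) \<longlonglongrightarrow> (of_real (suminf a) :: complex)"
    using sa summable_LIMSEQ tendsto_of_real by blast
  with lim3 have Ceq: "C = of_real (suminf a)" using LIMSEQ_unique by blast
  have ci0: "(\<lambda>u. \<Sum>k. T k u) contour_integrable_on circlepath 0 r"
    by (rule contour_integral_uniform_limit_circlepath(1)[OF integ ul]) (use r in auto)
  have ci: "(\<lambda>u. of_real (norm (g u) ^ 2) / u) contour_integrable_on circlepath 0 r"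
    by (rule contour_integrable_eq[OF ci0]) (use lv r in auto)
  have "((\<lambda>u. of_real (norm (g u) ^ 2) / u) has_contour_integral (2*pi*\<i>*C)) (circlepath 0 r)"
    using has_contour_integral_integral[OF ci] by (simp add: C_def)
  hence "((\<lambda>t. of_real (norm (g (circlepath 0 r t)) ^ 2)) has_integral C) {0..1}"
    using mean_link[OF r(1), of "\<lambda>u. of_real (norm (g u) ^ 2)"] by simp
  thus "((\<lambda>t. complex_of_real (norm (g (circlepath 0 r t)) ^ 2)) has_integral
           complex_of_real (\<Sum>k. norm (taylor_coeff g k) ^ 2 * r ^ (2*k))) {0..1}"
    by (simp add: Ceq a_def b_def)
qed

lemma boundary_behaviour:
  assumes hol: "f holomorphic_on ball 0 1" and inj: "inj_on f (ball 0 1)"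
    and img: "f ` ball 0 1 = ellipse_domain \<xi>" and xi: "\<xi> > 0" and e: "\<epsilon> > 0"
  shows "\<exists>r0. 0 \<le> r0 \<and> r0 < 1 \<and> (\<forall>z. r0 < norm z \<and> norm z < 1 \<longrightarrow>
            1 - \<epsilon> < (Re (f z))\<^sup>2 / (cosh \<xi>)\<^sup>2 + (Im (f z))\<^sup>2 / (sinh \<xi>)\<^sup>2)"
proof -
  define q where "q = (\<lambda>w::complex. (Re w)\<^sup>2 / (cosh \<xi>)\<^sup>2 + (Im w)\<^sup>2 / (sinh \<xi>)\<^sup>2)"
  have cpos: "cosh \<xi> > 0" by simp
  have spos: "sinh \<xi> > 0" using xi by simp
  obtain finv where finv_hol: "finv holomorphic_on (f ` ball 0 1)"
     and finv: "\<And>z. z \<in> ball 0 1 \<Longrightarrow> finv (f z) = z"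
    using holomorphic_has_inverse[OF hol open_ball inj] by metis
  define K where "K = {w. q w \<le> 1 - \<epsilon>}"
  have "continuous_on UNIV q" unfolding q_def by (intro continuous_intros) (use cpos spos in auto)
  hence clK: "closed K" unfolding K_def by (rule closed_Collect_le[OF _ continuous_on_const])
  have bK: "bounded K"
  proof (rule boundedI)
    fix w assume "w \<in> K"
    hence qw: "q w \<le> 1" using e by (auto simp: K_def)
    have "(Re w)\<^sup>2 / (cosh \<xi>)\<^sup>2 \<le> 1" using qw unfolding q_def
      by (smt (verit) divide_nonneg_nonneg zero_le_power2)
    hence "(Re w)\<^sup>2 \<le> (cosh \<xi>)\<^sup>2" using cpos by (simp add: divide_le_eq)
    hence r1: "\<bar>Re w\<bar> \<le> cosh \<xi>" using cpos by (simp add: power2_le_iff_abs_le)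
    have "(Im w)\<^sup>2 / (sinh \<xi>)\<^sup>2 \<le> 1" using qw unfolding q_def
      by (smt (verit) divide_nonneg_nonneg zero_le_power2)
    hence "(Im w)\<^sup>2 \<le> (sinh \<xi>)\<^sup>2" using spos by (simp add: divide_le_eq)
    hence r2: "\<bar>Im w\<bar> \<le> sinh \<xi>" using spos by (simp add: power2_le_iff_abs_le)
    show "norm w \<le> cosh \<xi> + sinh \<xi>" using cmod_le[of w] r1 r2 by linarith
  qed
  have cK: "compact K" using clK bK by (simp add: compact_eq_bounded_closed)
  have KE: "K \<subseteq> f ` ball 0 1" unfolding img ellipse_domain_def K_def q_def using e by auto
  have "compact (finv ` K)"
    by (intro compact_continuous_image cK continuous_on_subset[OF holomorphic_on_imp_continuous_on[OF finv_hol] KE])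
  have key: "norm z \<le> norm x" if "x \<in> finv ` K" "\<forall>y\<in>finv ` K. norm y \<le> norm x"
       "norm z < 1" "\<not> 1 - \<epsilon> < q (f z)" for x z
  proof -
    have "f z \<in> K" using that(4) by (simp add: K_def)
    moreover have "z = finv (f z)" using finv[of z] that(3) by simp
    ultimately have "z \<in> finv ` K" by blast
    thus ?thesis using that(2) by blast
  qed
  have "\<exists>r0. 0 \<le> r0 \<and> r0 < 1 \<and> (\<forall>z. r0 < norm z \<and> norm z < 1 \<longrightarrow> 1 - \<epsilon> < q (f z))"
  proof (cases "finv ` K = {}")
    case True
    have *: "1 - \<epsilon> < q (f z)" if "norm z < 1" for z
    proof (rule ccontr)
      assume "\<not> 1 - \<epsilon> < q (f z)"
      hence "f z \<in> K" by (simp add: K_def)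
      thus False using True by blast
    qed
    show ?thesis by (rule exI[of _ 0]) (use * in auto)
  next
    case False
    obtain x where x: "x \<in> finv ` K" "\<forall>y\<in>finv ` K. norm y \<le> norm x"
      using continuous_attains_sup[OF \<open>compact (finv ` K)\<close> False continuous_on_norm_id] by blast
    have "x \<in> ball 0 1"
    proof -
      obtain w where w: "w \<in> K" "x = finv w" using x(1) by blast
      then obtain z where "z \<in> ball 0 1" "w = f z" using KE by blast
      thus ?thesis using w finv by simp
    qed
    hence "norm x < 1" by simp
    moreover have "1 - \<epsilon> < q (f z)" if "norm x < norm z" "norm z < 1" for z
      using key[OF x that(2)] that(1) by linarith
    ultimately show ?thesis by (intro exI[of _ "norm x"] conjI allI impI) auto
  qed
  thus ?thesis unfolding q_def .
qed

lemma riemann_unique: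
  assumes holf: "f holomorphic_on ball 0 1" and injf: "inj_on f (ball 0 1)"
    and holg: "g holomorphic_on ball 0 1" and injg: "inj_on g (ball 0 1)"
    and img: "g ` ball 0 1 = f ` ball 0 1" and f0: "f 0 = 0" and g0: "g 0 = 0"
    and d: "deriv g 0 = deriv f 0" and d0: "deriv f 0 \<noteq> 0"
    and z: "z \<in> ball 0 1"
  shows "g z = f z"
proof -
  obtain finv where finv_hol: "finv holomorphic_on (f ` ball 0 1)"
     and finv: "\<And>z. z \<in> ball 0 1 \<Longrightarrow> finv (f z) = z"
    using holomorphic_has_inverse[OF holf open_ball injf] by metis
  obtain ginv where ginv_hol: "ginv holomorphic_on (g ` ball 0 1)"
     and ginv: "\<And>z. z \<in> ball 0 1 \<Longrightarrow> ginv (g z) = z"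
    using holomorphic_has_inverse[OF holg open_ball injg] by metis
  define h where "h = finv \<circ> g"
  define k where "k = ginv \<circ> f"
  have hh: "h holomorphic_on ball 0 1" unfolding h_def
    by (rule holomorphic_on_compose_gen[OF holg finv_hol]) (simp add: img)
  have kh: "k holomorphic_on ball 0 1" unfolding k_def
    by (rule holomorphic_on_compose_gen[OF holf ginv_hol]) (simp add: img)
  have hz: "h z \<in> ball 0 1 \<and> f (h z) = g z" if "z \<in> ball 0 1" for z
  proof -
    have "g z \<in> f ` ball 0 1" using that img[symmetric] by (simp add: image_eqI)
    then obtain y where "y \<in> ball 0 1" "g z = f y" by (elim imageE) blast
    thus ?thesis using finv by (simp add: h_def)
  qed
  have kz: "k z \<in> ball 0 1 \<and> g (k z) = f z" if "z \<in> ball 0 1" for z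
  proof -
    have "f z \<in> g ` ball 0 1" using that img by (simp add: image_eqI)
    then obtain y where "y \<in> ball 0 1" "f z = g y" by (elim imageE) blast
    thus ?thesis using ginv by (simp add: k_def)
  qed
  have "h 0 = finv (f 0)" by (simp add: h_def g0 f0)
  hence h0: "h 0 = 0" using finv[of 0] by simp
  have "k 0 = ginv (g 0)" by (simp add: k_def g0 f0)
  hence k0: "k 0 = 0" using ginv[of 0] by simp
  have hn: "norm (h z) < 1" if "norm z < 1" for z using hz[of z] that by simp
  have kn: "norm (k z) < 1" if "norm z < 1" for z using kz[of z] that by simp
  define z0 :: complex where "z0 = 1/2"
  have z0: "norm z0 < 1" "z0 \<noteq> 0" by (auto simp: z0_def)
  have hle: "norm (h z0) \<le> norm z0" using Schwarz_Lemma(1)[OF hh h0 hn z0(1)] .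
  have "k (h z0) = z0"
  proof -
    have "g (k (h z0)) = g z0" using kz[of "h z0"] hz[of z0] z0 by simp
    moreover have "k (h z0) \<in> ball 0 1" using kz[of "h z0"] hz[of z0] z0 by simp
    ultimately show ?thesis using injg z0 by (auto simp: inj_on_def)
  qed
  moreover have "norm (k (h z0)) \<le> norm (h z0)" using Schwarz_Lemma(1)[OF kh k0 kn] hn z0 by simp
  ultimately have "norm (h z0) = norm z0" using hle by simp
  then obtain \<alpha> where \<alpha>: "\<And>z. norm z < 1 \<Longrightarrow> h z = \<alpha> * z" "norm \<alpha> = 1"
    using Schwarz_Lemma(3)[OF hh h0 hn z0(1)] z0 by blast
  have geq: "g z = f (\<alpha> * z)" if "z \<in> ball 0 1" for z
    using hz[OF that] \<alpha>(1)[of z] that by simp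
  have "((\<lambda>z. f (\<alpha> * z)) has_field_derivative (deriv f (\<alpha> * 0) * \<alpha>)) (at 0)"
    by (rule DERIV_chain2[of f]) (auto intro!: holomorphic_derivI[OF holf] derivative_eq_intros)
  hence "((\<lambda>z. f (\<alpha> * z)) has_field_derivative (deriv f 0 * \<alpha>)) (at 0)" by simp
  hence "(g has_field_derivative (deriv f 0 * \<alpha>)) (at 0)"
    by (rule has_field_derivative_transform_within_open[of _ _ _ "ball 0 1"]) (auto simp: geq)
  hence "deriv g 0 = deriv f 0 * \<alpha>" by (rule DERIV_imp_deriv)
  hence "\<alpha> = 1" using d d0 by simp
  thus ?thesis using geq z by simp
qed

lemma coeff_sum:
  fixes f g P :: "complex \<Rightarrow> complex" and \<Psi> :: "complex \<Rightarrow> real"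
  assumes holf: "f holomorphic_on ball 0 1" and injf: "inj_on f (ball 0 1)"
    and img: "f ` ball 0 1 = ellipse_domain \<xi>" and xi: "\<xi> > 0" and f0: "f 0 = 0"
    and holg: "g holomorphic_on ball 0 1" and holP: "P holomorphic_on UNIV"
    and decomp: "\<And>z. z \<in> ball 0 1 \<Longrightarrow> norm (g z) ^ 2 = Re (P (f z)) + \<Psi> (f z)"
    and bnd: "\<And>w. w \<in> ellipse_domain \<xi> \<Longrightarrow>
               \<bar>\<Psi> w\<bar> \<le> M * (1 - ((Re w)\<^sup>2 / (cosh \<xi>)\<^sup>2 + (Im w)\<^sup>2 / (sinh \<xi>)\<^sup>2))"
    and M: "M \<ge> 0" and P0: "Re (P 0) = e"
  shows "(\<lambda>k. norm (taylor_coeff g k) ^ 2) sums e"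
proof -
  define a where "a = (\<lambda>k. norm (taylor_coeff g k) ^ 2)"
  define S where "S = (\<lambda>r. \<Sum>k. a k * r ^ (2*k))"
  have a0: "a k \<ge> 0" for k by (simp add: a_def)
  have Ssum: "summable (\<lambda>k. a k * r ^ (2*k))" if "0 < r" "r < 1" for r
    using parseval(1)[OF holg that] by (simp add: a_def)
  have Sint: "\<bar>S r - e\<bar> \<le> B" if r: "0 < r" "r < 1"
      and B: "\<And>z. norm z = r \<Longrightarrow> \<bar>\<Psi> (f z)\<bar> \<le> B" and B0: "B \<ge> 0" for r B
  proof -
    define c where "c = circlepath 0 r"
    have cin: "c t \<in> ball 0 1" for t using r by (simp add: c_def circlepath norm_mult)
    have cn: "norm (c t) = r" for t using r by (simp add: c_def circlepath norm_mult)
    have Hg: "((\<lambda>t. complex_of_real (norm (g (c t)) ^ 2)) has_integral complex_of_real (S r)) {0..1}"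
      using parseval(2)[OF holg r] by (simp add: c_def S_def a_def)
    have holPf: "(P \<circ> f) holomorphic_on ball 0 1"
      by (rule holomorphic_on_compose_gen[OF holf holP]) auto
    have HP: "((\<lambda>t. P (f (c t))) has_integral P (f 0)) {0..1}"
      using mean_value[OF holPf r] by (simp add: c_def)
    have HPc: "((\<lambda>t. cnj (P (f (c t)))) has_integral cnj (P (f 0))) {0..1}"
      using HP has_integral_cnj[of "\<lambda>t. P (f (c t))"] by (simp add: o_def)
    have "((\<lambda>t. (P (f (c t)) + cnj (P (f (c t)))) * (1/2)) has_integral ((P (f 0) + cnj (P (f 0))) * (1/2))) {0..1}"
      by (intro has_integral_mult_left has_integral_add HP HPc)
    hence HRe: "((\<lambda>t. complex_of_real (Re (P (f (c t))))) has_integral complex_of_real e) {0..1}"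
      by (simp add: complex_add_cnj f0 P0)
    have "((\<lambda>t. complex_of_real (norm (g (c t)) ^ 2) - complex_of_real (Re (P (f (c t)))))
           has_integral (complex_of_real (S r) - complex_of_real e)) {0..1}"
      by (rule has_integral_diff[OF Hg HRe])
    hence HPsi: "((\<lambda>t. complex_of_real (\<Psi> (f (c t)))) has_integral complex_of_real (S r - e)) {0..1}"
    proof (subst (asm) has_integral_cong[where g = "\<lambda>t. complex_of_real (\<Psi> (f (c t)))"])
      fix t show "complex_of_real ((cmod (g (c t)))\<^sup>2) - complex_of_real (Re (P (f (c t)))) =
           complex_of_real (\<Psi> (f (c t)))" using decomp[OF cin[of t]] by simp
    qed simp
    have "norm (complex_of_real (S r - e)) \<le> B * measure lborel (cbox 0 (1::real))"
      by (rule has_integral_bound[OF B0]) (use HPsi B cn in auto)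
    thus ?thesis by (simp del: of_real_diff add: of_real_diff[symmetric])
  qed
  have near: "\<exists>r0. 0 \<le> r0 \<and> r0 < 1 \<and> (\<forall>r. r0 < r \<and> r < 1 \<longrightarrow> \<bar>S r - e\<bar> \<le> \<epsilon>)" if e: "\<epsilon> > 0" for \<epsilon>
  proof -
    define \<epsilon>' where "\<epsilon>' = \<epsilon> / (M + 1)"
    have e': "\<epsilon>' > 0" using e M by (simp add: \<epsilon>'_def)
    obtain r0 where r0: "0 \<le> r0" "r0 < 1" and
      H: "\<And>z. r0 < norm z \<Longrightarrow> norm z < 1 \<Longrightarrow>
            1 - \<epsilon>' < (Re (f z))\<^sup>2 / (cosh \<xi>)\<^sup>2 + (Im (f z))\<^sup>2 / (sinh \<xi>)\<^sup>2"
      using boundary_behaviour[OF holf injf img xi e'] by blast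
    have "\<bar>S r - e\<bar> \<le> \<epsilon>" if r: "r0 < r" "r < 1" for r
    proof (rule Sint)
      show "0 < r" "r < 1" using r r0 by auto
      show "0 \<le> \<epsilon>" using e by simp
      fix z :: complex assume z: "norm z = r"
      have fz: "f z \<in> ellipse_domain \<xi>" using img z r by auto
      have "\<bar>\<Psi> (f z)\<bar> \<le> M * (1 - ((Re (f z))\<^sup>2 / (cosh \<xi>)\<^sup>2 + (Im (f z))\<^sup>2 / (sinh \<xi>)\<^sup>2))"
        by (rule bnd[OF fz])
      also have "\<dots> \<le> M * \<epsilon>'" using H[of z] z r M by (intro mult_left_mono) auto
      also have "\<dots> \<le> \<epsilon>" using M e by (simp add: \<epsilon>'_def field_simps)
      finally show "\<bar>\<Psi> (f z)\<bar> \<le> \<epsilon>" .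
    qed
    thus ?thesis using r0 by blast
  qed
  have part: "(\<Sum>k<N. a k) \<le> e" for N
  proof (rule field_le_epsilon)
    fix \<epsilon> :: real assume e: "\<epsilon> > 0"
    obtain r0 where r0: "0 \<le> r0" "r0 < 1" "\<And>r. r0 < r \<Longrightarrow> r < 1 \<Longrightarrow> \<bar>S r - e\<bar> \<le> \<epsilon>"
      using near[OF e] by blast
    have ev: "eventually (\<lambda>r. (\<Sum>k<N. a k * r ^ (2*k)) \<le> e + \<epsilon>) (at_left (1::real))"
      using eventually_at_left_real[OF r0(2)]
    proof (rule eventually_mono)
      fix r assume r: "r \<in> {r0<..<1}"
      hence rr: "0 < r" "r < 1" using r0 by auto
      have "(\<Sum>k<N. a k * r ^ (2*k)) \<le> S r" unfolding S_def
        by (rule sum_le_suminf[OF Ssum[OF rr]]) (auto simp: a0)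
      also have "\<dots> \<le> e + \<epsilon>" using r0(3)[of r] r by auto
      finally show "(\<Sum>k<N. a k * r ^ (2*k)) \<le> e + \<epsilon>" .
    qed
    have "((\<lambda>r. \<Sum>k<N. a k * r ^ (2*k)) \<longlongrightarrow> (\<Sum>k<N. a k * 1 ^ (2*k))) (at_left (1::real))"
      by (intro tendsto_intros)
    hence "(\<Sum>k<N. a k * 1 ^ (2*k)) \<le> e + \<epsilon>"
      using ev by (rule tendsto_upperbound) simp
    thus "(\<Sum>k<N. a k) \<le> e + \<epsilon>" by simp
  qed
  have sa: "summable a"
  proof (rule bounded_imp_summable[of _ e])
    fix n show "0 \<le> a n" by (rule a0)
    have "(\<Sum>k\<le>n. a k) = (\<Sum>k<Suc n. a k)" by (simp only: lessThan_Suc_atMost)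
    thus "(\<Sum>k\<le>n. a k) \<le> e" using part[of "Suc n"] by simp
  qed
  have le: "suminf a \<le> e" by (rule suminf_le_const[OF sa part])
  have ge: "e \<le> suminf a"
  proof (rule field_le_epsilon)
    fix \<epsilon> :: real assume e: "\<epsilon> > 0"
    obtain r0 where r0: "0 \<le> r0" "r0 < 1" "\<And>r. r0 < r \<Longrightarrow> r < 1 \<Longrightarrow> \<bar>S r - e\<bar> \<le> \<epsilon>"
      using near[OF e] by blast
    define r where "r = (r0 + 1) / 2"
    have r: "r0 < r" "r < 1" "0 < r" using r0 by (auto simp: r_def)
    have "S r \<le> suminf a" unfolding S_def
    proof (rule suminf_le[OF _ Ssum[OF r(3,2)] sa])
      fix k show "a k * r ^ (2*k) \<le> a k" using r a0[of k] by (intro mult_left_le power_le_one) auto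
    qed
    thus "e \<le> suminf a + \<epsilon>" using r0(3)[OF r(1,2)] by linarith
  qed
  show ?thesis using sa le ge by (simp add: a_def[symmetric] sums_iff)
qed

lemma taylor_coeff_unique:
  fixes g :: "complex \<Rightarrow> complex"
  assumes R: "R > 0" and S: "\<And>z. z \<in> ball 0 R \<Longrightarrow> (\<lambda>k. c k * z ^ k) sums g z"
  shows "taylor_coeff g k = c k"
proof -
  have "(\<lambda>k. c k * (of_real (R/2)) ^ k) sums g (of_real (R/2))" using S[of "of_real (R/2)"] R by auto
  hence sm: "summable (\<lambda>k. c k * (of_real (R/2) :: complex) ^ k)" by (auto simp: sums_iff)
  have "fps_conv_radius (Abs_fps c) \<ge> norm (of_real (R/2) :: complex)"
    unfolding fps_conv_radius_def using conv_radius_geI[OF sm] by simp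
  hence "ereal (R/2) \<le> fps_conv_radius (Abs_fps c)" using R by simp
  moreover have "0 < ereal (R/2)" using R by simp
  ultimately have pos: "fps_conv_radius (Abs_fps c) > 0" by (meson less_le_trans)
  have "eventually (\<lambda>z. z \<in> ball 0 R) (nhds (0::complex))" by (rule eventually_nhds_in_open) (auto simp: R)
  hence ev: "eventually (\<lambda>z. eval_fps (Abs_fps c) z = g z) (nhds 0)"
  proof (rule eventually_mono)
    fix z :: complex assume "z \<in> ball 0 R"
    thus "eval_fps (Abs_fps c) z = g z" using S[of z] by (simp add: eval_fps_def sums_iff)
  qed
  have "g has_fps_expansion Abs_fps c" unfolding has_fps_expansion_def using pos ev by auto
  from fps_nth_fps_expansion[OF this, of k] show ?thesis by (simp add: taylor_coeff_def)
qed


lemma quad_id0: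
  fixes X Y tS tC al u v :: real
  assumes "tC = tS + 1" "al * (tC + tS) = 1" "u * tC = 1" "v * tS = 1"
  shows "X + Y = al * (X - Y) + 2 * tS * tC * al + 2 * tS * tC * al * (X * u + Y * v - 1)"
  using assms by algebra

lemma quart_id0:
  fixes X Y tS tC a u v K :: real
  assumes "tC = tS + 1" "K = (tC+tS)^2 + 4 * tC * tS" "a * K = 1" "u * tC = 1" "v * tS = 1"
  shows "(X+Y)^2 = a * (X^2 - 6 * X * Y + Y^2) + (1 - a) * (X - Y) + tC * tS * (1 - a)
             + (X * u + Y * v - 1) * ((1 - a) * (tC * X + tS * Y + tC * tS))"
  using assms by algebra

lemma Re4: "Re (w^4) = ((Re w)^2)^2 - 6 * (Re w)^2 * (Im w)^2 + ((Im w)^2)^2"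
proof -
  have "w^4 = (w^2)^2" by (simp flip: power_mult)
  hence H1: "Re (w^4) = (Re (w^2))^2 - (Im (w^2))^2" by (simp only: Re_power2[of "w^2"])
  have H2: "Re (w^2) = (Re w)^2 - (Im w)^2" by (rule Re_power2)
  have H3: "Im (w^2) = 2 * Re w * Im w" by (rule Im_power2)
  show ?thesis using H1 H2 H3 by algebra
qed

lemma real_sq: "x \<in> \<real> \<Longrightarrow> (x::complex)^2 = of_real (norm x ^ 2)"
  by (auto elim!: Reals_cases simp flip: of_real_power)

lemma abs_ser:
  assumes "\<And>z. z \<in> ball 0 1 \<Longrightarrow> (\<lambda>k. a k * z^k) sums (f z :: complex)" and z: "z \<in> ball 0 1"
  shows "summable (\<lambda>k. norm (a k * z^k))"
proof -
  have nz: "norm z < 1" using z by simp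
  obtain \<rho> where r12: "norm z < \<rho>" and r11: "\<rho> < 1" using dense[OF nz] by blast
  have r13: "0 < \<rho>" using le_less_trans[OF norm_ge_zero r12] .
  note r1 = r11 r12 r13
  have "of_real \<rho> \<in> ball (0::complex) 1" "norm z < norm (of_real \<rho> :: complex)"
    by (simp_all only: mem_ball_0 norm_of_real) (use r1 in auto)
  from assms(1)[OF this(1)] have "summable (\<lambda>k. a k * (of_real \<rho>) ^ k)" by (simp add: sums_iff)
  thus ?thesis by (rule powser_insidea) fact
qed

theorem mainTheorem4:
  fixes \<xi> :: real and f :: "complex \<Rightarrow> complex"
  assumes "\<xi> > 0"
    and "f holomorphic_on ball 0 1"
    and "inj_on f (ball 0 1)"
    and "f ` ball 0 1 = ellipse_domain \<xi>"
    and "f 0 = 0"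
    and "deriv f 0 \<in> \<real>" and "Re (deriv f 0) > 0"
  defines "A \<equiv> (\<lambda>n. taylor_coeff f (2 * n + 1))"
  shows "(\<forall>n. taylor_coeff f (2 * n) = 0)
    \<and> (\<lambda>n. (A n)\<^sup>2) sums complex_of_real
         (2 * (sinh \<xi>)\<^sup>2 * (cosh \<xi>)\<^sup>2 / ((sinh \<xi>)\<^sup>2 + (cosh \<xi>)\<^sup>2))
    \<and> (\<lambda>n. (A n)\<^sup>2) sums complex_of_real ((sinh (2 * \<xi>))\<^sup>2 / (2 * cosh (2 * \<xi>)))
    \<and> (\<lambda>n. (\<Sum>j\<le>n. A j * A (n - j))\<^sup>2) sums
         complex_of_real ((sinh (2 * \<xi>)) ^ 4 / (2 * cosh (4 * \<xi>)))"
proof -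
  note xi = assms(1) and holf = assms(2) and injf = assms(3) and img = assms(4) and f0 = assms(5)
  define a where "a = taylor_coeff f"
  have ser: "(\<lambda>k. a k * z ^ k) sums f z" if "z \<in> ball 0 1" for z
    using holomorphic_power_series[OF holf that] by (simp add: a_def taylor_coeff_def)
  have df: "deriv f 0 \<noteq> 0" using assms(7) by auto
  have da1: "taylor_coeff h 1 = deriv h 0" for h by (simp add: taylor_coeff_def)
  have Eneg: "- w \<in> ellipse_domain \<xi> \<longleftrightarrow> w \<in> ellipse_domain \<xi>" for w by (simp add: ellipse_domain_def)
  have Ecnj: "cnj w \<in> ellipse_domain \<xi> \<longleftrightarrow> w \<in> ellipse_domain \<xi>" for w by (simp add: ellipse_domain_def)
  have fE: "f z \<in> ellipse_domain \<xi>" if "z \<in> ball 0 1" for z using img that by blast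
  have Ef: "\<exists>y\<in>ball 0 1. w = f y" if "w \<in> ellipse_domain \<xi>" for w using img that by blast

  define g1 where "g1 = (\<lambda>z. - f (- z))"
  have holg1: "g1 holomorphic_on ball 0 1"
  proof -
    have m: "(\<lambda>z::complex. - z) holomorphic_on ball 0 1" by (intro holomorphic_intros)
    have "(f \<circ> (\<lambda>z. - z)) holomorphic_on ball 0 1"
      by (rule holomorphic_on_compose_gen[OF m holf]) auto
    from holomorphic_on_minus[OF this] show ?thesis by (simp add: g1_def o_def)
  qed
  have injg1: "inj_on g1 (ball 0 1)"
  proof (rule inj_onI)
    fix x y assume xy: "x \<in> ball 0 1" "y \<in> ball 0 1" "g1 x = g1 y"
    hence "f (- x) = f (- y)" "- x \<in> ball 0 1" "- y \<in> ball 0 1" by (auto simp: g1_def)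
    hence "- x = - y" using inj_onD[OF injf] by blast
    thus "x = y" by simp
  qed
  have img1: "g1 ` ball 0 1 = f ` ball 0 1"
  proof
    show "g1 ` ball 0 1 \<subseteq> f ` ball 0 1"
    proof
      fix w assume "w \<in> g1 ` ball 0 1"
      then obtain x where x: "x \<in> ball 0 1" "w = - f (- x)" by (auto simp: g1_def)
      have "f (- x) \<in> ellipse_domain \<xi>" using x by (intro fE) simp
      hence "w \<in> ellipse_domain \<xi>" using Eneg x by simp
      thus "w \<in> f ` ball 0 1" using img by simp
    qed
  next
    show "f ` ball 0 1 \<subseteq> g1 ` ball 0 1"
    proof
      fix w assume "w \<in> f ` ball 0 1"
      then obtain x where x: "x \<in> ball 0 1" "w = f x" by auto
      have "- w \<in> ellipse_domain \<xi>" using Eneg fE[OF x(1)] x by simp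
      then obtain y where y: "y \<in> ball 0 1" "- w = f y" using Ef by blast
      have "w = g1 (- y)" using y(2)[symmetric] by (simp add: g1_def)
      moreover have "- y \<in> ball 0 1" using y by simp
      ultimately show "w \<in> g1 ` ball 0 1" by blast
    qed
  qed
  have g10: "g1 0 = 0" using f0 by (simp add: g1_def)
  have ser1: "(\<lambda>k. (- (a k * (-1)^k)) * z^k) sums g1 z" if "z \<in> ball 0 1" for z
  proof -
    have "- z \<in> ball 0 1" using that by simp
    from sums_minus[OF ser[OF this]]
    have "(\<lambda>k. - (a k * (- z) ^ k)) sums g1 z" by (simp add: g1_def)
    moreover have "(\<lambda>k. - (a k * (- z) ^ k)) = (\<lambda>k. (- (a k * (-1)^k)) * z^k)"
      by (simp add: fun_eq_iff power_minus[of z])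
    ultimately show ?thesis by simp
  qed
  have tc1: "taylor_coeff g1 k = - (a k * (-1)^k)" for k
    by (rule taylor_coeff_unique[of 1]) (use ser1 in auto)
  have dg1: "deriv g1 0 = deriv f 0" using tc1[of 1] da1[of g1] da1[of f] by (simp add: a_def)
  have eq1: "g1 z = f z" if "z \<in> ball 0 1" for z
    by (rule riemann_unique[OF holf injf holg1 injg1 img1 f0 g10 dg1 df that])
  have "taylor_coeff f k = - (a k * (-1)^k)" for k
    by (rule taylor_coeff_unique[of 1]) (use ser1 eq1 in auto)
  hence aodd: "a k = - (a k * (-1)^k)" for k by (simp add: a_def)
  have aeven: "a (2 * n) = 0" for n
  proof -
    have "a (2 * n) = - a (2 * n)" using aodd[of "2 * n"] by simp
    thus ?thesis by simp
  qed
  have aeven': "a k = 0" if "even k" for k using aeven[of "k div 2"] that by simp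

  define g2 where "g2 = cnj \<circ> f \<circ> cnj"
  have cD: "cnj ` ball 0 1 \<subseteq> ball (0::complex) 1" by auto
  have holg2: "g2 holomorphic_on ball 0 1" unfolding g2_def
    by (rule holomorphic_on_compose_cnj_cnj[OF holomorphic_on_subset[OF holf cD]]) auto
  have injg2: "inj_on g2 (ball 0 1)"
  proof (rule inj_onI)
    fix x y assume xy: "x \<in> ball 0 1" "y \<in> ball 0 1" "g2 x = g2 y"
    hence "f (cnj x) = f (cnj y)" "cnj x \<in> ball 0 1" "cnj y \<in> ball 0 1" by (auto simp: g2_def)
    hence "cnj x = cnj y" using inj_onD[OF injf] by blast
    thus "x = y" by simp
  qed
  have img2: "g2 ` ball 0 1 = f ` ball 0 1"
  proof
    show "g2 ` ball 0 1 \<subseteq> f ` ball 0 1"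
    proof
      fix w assume "w \<in> g2 ` ball 0 1"
      then obtain x where x: "x \<in> ball 0 1" "w = cnj (f (cnj x))" by (auto simp: g2_def)
      have "f (cnj x) \<in> ellipse_domain \<xi>" using x by (intro fE) simp
      hence "w \<in> ellipse_domain \<xi>" using Ecnj x by simp
      thus "w \<in> f ` ball 0 1" using img by simp
    qed
  next
    show "f ` ball 0 1 \<subseteq> g2 ` ball 0 1"
    proof
      fix w assume "w \<in> f ` ball 0 1"
      then obtain x where x: "x \<in> ball 0 1" "w = f x" by auto
      have "cnj w \<in> ellipse_domain \<xi>" using Ecnj fE[OF x(1)] x by simp
      then obtain y where y: "y \<in> ball 0 1" "cnj w = f y" using Ef by blast
      have "w = g2 (cnj y)" using y by (simp add: g2_def flip: y(2))
      moreover have "cnj y \<in> ball 0 1" using y by simp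
      ultimately show "w \<in> g2 ` ball 0 1" by blast
    qed
  qed
  have g20: "g2 0 = 0" using f0 by (simp add: g2_def)
  have ser2: "(\<lambda>k. cnj (a k) * z^k) sums g2 z" if "z \<in> ball 0 1" for z
  proof -
    have "cnj z \<in> ball 0 1" using that by simp
    from ser[OF this] have "(\<lambda>k. cnj (a k * cnj z ^ k)) sums cnj (f (cnj z))" by (subst sums_cnj)
    thus ?thesis by (simp add: g2_def)
  qed
  have tc2: "taylor_coeff g2 k = cnj (a k)" for k
    by (rule taylor_coeff_unique[of 1]) (use ser2 in auto)
  have "cnj (deriv f 0) = deriv f 0" using assms(6) Reals_cnj_iff by blast
  hence dg2: "deriv g2 0 = deriv f 0" using tc2[of 1] da1[of g2] da1[of f] by (simp add: a_def)
  have eq2: "g2 z = f z" if "z \<in> ball 0 1" for z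
    by (rule riemann_unique[OF holf injf holg2 injg2 img2 f0 g20 dg2 df that])
  have "taylor_coeff f k = cnj (a k)" for k
    by (rule taylor_coeff_unique[of 1]) (use ser2 eq2 in auto)
  hence areal: "a k \<in> \<real>" for k by (simp add: a_def Reals_cnj_iff)
  have Areal: "A n \<in> \<real>" for n using areal by (simp add: A_def a_def)
  have A_a: "A n = a (2 * n + 1)" for n by (simp add: A_def a_def)

  define s where "s = sinh \<xi>"
  define c where "c = cosh \<xi>"
  have spos: "s > 0" using xi by (simp add: s_def)
  have cpos: "c > 0" by (simp add: c_def)
  have cs: "c^2 = s^2 + 1" by (simp add: c_def s_def cosh_square_eq)
  define q where "q = (\<lambda>w::complex. (Re w)\<^sup>2 / c\<^sup>2 + (Im w)\<^sup>2 / s\<^sup>2)"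
  have qE: "q w < 1" if "w \<in> ellipse_domain \<xi>" for w
    using that by (simp add: q_def ellipse_domain_def c_def s_def)
  have XE: "(Re w)^2 \<le> c^2" "(Im w)^2 \<le> s^2" if "w \<in> ellipse_domain \<xi>" for w
  proof -
    have "(Re w)\<^sup>2 / c\<^sup>2 + (Im w)\<^sup>2 / s\<^sup>2 < 1" using qE[OF that] by (simp add: q_def)
    moreover have "(Re w)\<^sup>2 / c\<^sup>2 \<ge> 0" "(Im w)\<^sup>2 / s\<^sup>2 \<ge> 0" by simp_all
    ultimately have "(Re w)\<^sup>2 / c\<^sup>2 \<le> 1" "(Im w)\<^sup>2 / s\<^sup>2 \<le> 1" by linarith+
    thus "(Re w)^2 \<le> c^2" "(Im w)^2 \<le> s^2" using cpos spos by (simp_all add: divide_le_eq)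
  qed

  define al where "al = 1 / (c^2 + s^2)"
  define \<beta> where "\<beta> = 2 * s^2 * c^2 * al"
  have cs0: "0 < c^2 + s^2" using cpos spos by (intro add_pos_pos) simp_all
  have alpos: "al > 0" using cs0 by (simp add: al_def)
  have ne: "c^2 + s^2 \<noteq> 0" using cs0 by linarith
  have h1: "al * (c^2 + s^2) = 1" unfolding al_def using ne by simp
  have bpos: "\<beta> \<ge> 0" using alpos by (simp add: \<beta>_def)
  have sum1: "(\<lambda>k. norm (taylor_coeff f k) ^ 2) sums \<beta>"
  proof (rule coeff_sum[OF holf injf img xi f0 holf, where P = "\<lambda>w. of_real al * w^2 + of_real \<beta>"
        and \<Psi> = "\<lambda>w. \<beta> * (q w - 1)" and M = \<beta>])
    show "(\<lambda>w. of_real al * w^2 + of_real \<beta>) holomorphic_on UNIV" by (intro holomorphic_intros)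
    show "0 \<le> \<beta>" by (rule bpos)
    show "Re (complex_of_real al * 0 ^ 2 + complex_of_real \<beta>) = \<beta>" by simp
  next
    fix z :: complex assume "z \<in> ball 0 1"
    define w where "w = f z"
    have "(norm w)^2 = (Re w)^2 + (Im w)^2" by (rule cmod_power2)
    also have "\<dots> = al * ((Re w)^2 - (Im w)^2) + 2 * s^2 * c^2 * al
         + 2 * s^2 * c^2 * al * ((Re w)^2 * (1 / c^2) + (Im w)^2 * (1 / s^2) - 1)"
    proof -
      show ?thesis
        by (rule quad_id0[where tC = "c^2" and tS = "s^2" and al = al and u = "1/c^2" and v = "1/s^2", OF cs h1])
           (use cpos spos in auto)
    qed
    also have "\<dots> = Re (of_real al * w^2 + of_real \<beta>) + \<beta> * (q w - 1)"
      by (simp add: Re_power2 q_def \<beta>_def)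
    finally show "norm (f z) ^ 2 = Re (of_real al * (f z)^2 + of_real \<beta>) + \<beta> * (q (f z) - 1)"
      by (simp add: w_def)
  next
    fix w assume w: "w \<in> ellipse_domain \<xi>"
    have "\<bar>\<beta> * (q w - 1)\<bar> = \<beta> * (1 - q w)" using qE[OF w] bpos by (simp add: abs_mult)
    thus "\<bar>\<beta> * (q w - 1)\<bar> \<le> \<beta> * (1 - ((Re w)\<^sup>2 / (cosh \<xi>)\<^sup>2 + (Im w)\<^sup>2 / (sinh \<xi>)\<^sup>2))"
      by (simp add: q_def c_def s_def)
  qed
  have sm21: "strict_mono (\<lambda>n::nat. 2 * n + 1)" by (auto simp: strict_mono_def)
  have notodd: "even k" if "k \<notin> range (\<lambda>n::nat. 2 * n + 1)" for k
  proof (rule ccontr)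
    assume "odd k"
    hence "k = 2 * (k div 2) + 1" by simp
    thus False using that by blast
  qed
  have "(\<lambda>n. norm (a (2 * n + 1)) ^ 2) sums \<beta>"
    using sums_mono_reindex[OF sm21, of "\<lambda>k. norm (a k) ^ 2" \<beta>] sum1 aeven' notodd
    by (simp add: a_def)
  hence "(\<lambda>n. complex_of_real (norm (A n) ^ 2)) sums complex_of_real \<beta>"
    by (simp only: sums_of_real_iff A_a)
  hence S1: "(\<lambda>n. (A n)\<^sup>2) sums complex_of_real \<beta>"
    using real_sq[OF Areal] by simp
  have beta1: "\<beta> = 2 * (sinh \<xi>)\<^sup>2 * (cosh \<xi>)\<^sup>2 / ((sinh \<xi>)\<^sup>2 + (cosh \<xi>)\<^sup>2)"
    by (simp add: \<beta>_def al_def s_def c_def add.commute)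
  have sh2: "sinh (2 * \<xi>) = 2 * s * c" by (simp only: sinh_double s_def c_def)
  have ch2: "cosh (2 * \<xi>) = c^2 + s^2" by (simp only: cosh_double s_def c_def)
  have beta2: "\<beta> = (sinh (2 * \<xi>))\<^sup>2 / (2 * cosh (2 * \<xi>))"
  proof -
    have "\<beta> * (2 * (c^2+s^2)) = (2 * s * c)^2" using h1 unfolding \<beta>_def by algebra
    hence "\<beta> = (2 * s * c)^2 / (2 * (c^2+s^2))" by (rule eq_divide_imp[rotated]) (use cs0 in \<open>metis less_irrefl mult_pos_pos zero_less_numeral\<close>)
    thus ?thesis unfolding sh2 ch2 .
  qed

  define B where "B = (\<lambda>n. \<Sum>j\<le>n. A j * A (n - j))"
  have Breal: "B n \<in> \<real>" for n unfolding B_def using Areal by auto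
  have serA: "(\<lambda>n. A n * z ^ (2 * n + 1)) sums f z" if z: "z \<in> ball 0 1" for z
    using sums_mono_reindex[OF sm21, of "\<lambda>k. a k * z ^ k" "f z"] ser[OF z] aeven' notodd
    by (simp add: A_a)
  have absA: "summable (\<lambda>n. norm (A n * z ^ (2 * n + 1)))" if z: "z \<in> ball 0 1" for z
  proof -
    have "summable (\<lambda>k. norm (a k * z ^ k))" by (rule abs_ser[OF ser z])
    hence "(\<lambda>k. norm (a k * z ^ k)) sums (\<Sum>k. norm (a k * z ^ k))" by (rule summable_sums)
    hence "(\<lambda>n. norm (a (2 * n + 1) * z ^ (2 * n + 1))) sums (\<Sum>k. norm (a k * z ^ k))"
      using sums_mono_reindex[OF sm21, of "\<lambda>k. norm (a k * z ^ k)"] aeven' notodd by simp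
    thus ?thesis by (simp add: sums_iff A_a)
  qed
  have serB: "(\<lambda>n. B n * z ^ (2 * n + 2)) sums (f z)^2" if z: "z \<in> ball 0 1" for z
  proof -
    have "(\<lambda>k. \<Sum>i\<le>k. (A i * z ^ (2 * i + 1)) * (A (k - i) * z ^ (2 * (k - i) + 1))) sums
            ((\<Sum>n. A n * z ^ (2 * n + 1)) * (\<Sum>n. A n * z ^ (2 * n + 1)))"
      by (rule Cauchy_product_sums[OF absA[OF z] absA[OF z]])
    moreover have "(\<Sum>n. A n * z ^ (2 * n + 1)) = f z" using serA[OF z] by (simp add: sums_iff)
    moreover have "(\<Sum>i\<le>k. (A i * z ^ (2 * i + 1)) * (A (k - i) * z ^ (2 * (k - i) + 1))) = B k * z ^ (2 * k + 2)" for k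
    proof -
      have "(\<Sum>i\<le>k. (A i * z ^ (2 * i + 1)) * (A (k - i) * z ^ (2 * (k - i) + 1))) =
            (\<Sum>i\<le>k. (A i * A (k - i)) * z ^ (2 * k + 2))"
      proof (rule sum.cong)
        fix i assume "i \<in> {..k}"
        hence "2 * i + 1 + (2 * (k - i) + 1) = 2 * k + 2" by auto
        hence eqz: "z ^ (2 * i + 1) * z ^ (2 * (k - i) + 1) = z ^ (2 * k + 2)" by (metis power_add)
        have "(A i * z ^ (2 * i + 1)) * (A (k - i) * z ^ (2 * (k - i) + 1)) =
              (A i * A (k - i)) * (z ^ (2 * i + 1) * z ^ (2 * (k - i) + 1))" by (simp only: mult_ac)
        also have "\<dots> = (A i * A (k - i)) * z ^ (2 * k + 2)" by (simp only: eqz)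
        finally show "(A i * z ^ (2 * i + 1)) * (A (k - i) * z ^ (2 * (k - i) + 1)) = (A i * A (k - i)) * z ^ (2 * k + 2)" .
      qed simp
      thus ?thesis by (simp add: B_def sum_distrib_right)
    qed
    ultimately show ?thesis by (simp add: power2_eq_square)
  qed
  define d where "d = (\<lambda>k::nat. if odd k \<or> k = 0 then 0 else B (k div 2 - 1))"
  have sm22: "strict_mono (\<lambda>n::nat. 2 * n + 2)" by (auto simp: strict_mono_def)
  have d0: "d k = 0" if "k \<notin> range (\<lambda>n::nat. 2 * n + 2)" for k
  proof (rule ccontr)
    assume "d k \<noteq> 0"
    hence "even k" "k \<noteq> 0" by (auto simp: d_def split: if_splits)
    hence "k = 2 * (k div 2 - 1) + 2" by auto
    thus False using that by blast
  qed
  have d2: "d (2 * n + 2) = B n" for n by (simp add: d_def)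
  have serd: "(\<lambda>k. d k * z ^ k) sums (f z)^2" if z: "z \<in> ball 0 1" for z
    using sums_mono_reindex[OF sm22, of "\<lambda>k. d k * z ^ k" "(f z)^2"] serB[OF z] d0 d2 by simp
  have tcd: "taylor_coeff (\<lambda>z. (f z)^2) k = d k" for k
    by (rule taylor_coeff_unique[of 1]) (use serd in auto)
  define K where "K = (c^2 + s^2)^2 + 4 * c^2 * s^2"
  define a4 where "a4 = 1 / K"
  define e2 where "e2 = c^2 * s^2 * (1 - a4)"
  have Kpos: "K \<ge> 1" unfolding K_def using cs spos
    by (smt (verit) mult_nonneg_nonneg zero_le_power2 one_le_power)
  have a4: "a4 * K = 1" "0 \<le> 1 - a4" using Kpos by (auto simp: a4_def field_simps)
  define M2 where "M2 = (1 - a4) * (c^2 * c^2 + s^2 * s^2 + c^2 * s^2)"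
  have sum2: "(\<lambda>k. norm (taylor_coeff (\<lambda>z. (f z)^2) k) ^ 2) sums e2"
  proof (rule coeff_sum[OF holf injf img xi f0, where
        P = "\<lambda>w. of_real a4 * w^4 + of_real (1 - a4) * w^2 + of_real e2"
        and \<Psi> = "\<lambda>w. (q w - 1) * ((1 - a4) * (c^2 * (Re w)^2 + s^2 * (Im w)^2 + c^2 * s^2))"
        and M = M2])
    show "(\<lambda>z. (f z)^2) holomorphic_on ball 0 1" by (intro holomorphic_intros holf)
    show "(\<lambda>w. of_real a4 * w^4 + of_real (1 - a4) * w^2 + of_real e2) holomorphic_on UNIV"
      by (intro holomorphic_intros)
    show "0 \<le> M2" unfolding M2_def using a4(2) by simp
    show "Re (of_real a4 * 0^4 + of_real (1 - a4) * 0^2 + of_real e2) = e2" by simp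
  next
    fix z :: complex assume "z \<in> ball 0 1"
    define w where "w = f z"
    have "norm (w^2) ^ 2 = ((Re w)^2 + (Im w)^2)^2" by (simp add: norm_power cmod_power2)
    also have "\<dots> = a4 * (((Re w)^2)^2 - 6 * (Re w)^2 * (Im w)^2 + ((Im w)^2)^2)
         + (1 - a4) * ((Re w)^2 - (Im w)^2) + c^2 * s^2 * (1 - a4)
         + ((Re w)^2 * (1 / c^2) + (Im w)^2 * (1 / s^2) - 1)
           * ((1 - a4) * (c^2 * (Re w)^2 + s^2 * (Im w)^2 + c^2 * s^2))"
      by (rule quart_id0[where tC = "c^2" and tS = "s^2" and a = a4 and K = K and u = "1/c^2" and v = "1/s^2",
             OF cs _ a4(1)]) (use cpos spos in \<open>auto simp: K_def\<close>)
    also have "\<dots> = Re (of_real a4 * w^4 + of_real (1 - a4) * w^2 + of_real e2)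
        + (q w - 1) * ((1 - a4) * (c^2 * (Re w)^2 + s^2 * (Im w)^2 + c^2 * s^2))"
      by (simp add: Re_power2 Re4 q_def e2_def)
    finally show "norm ((f z)^2) ^ 2 = Re (of_real a4 * (f z)^4 + of_real (1 - a4) * (f z)^2 + of_real e2)
        + (q (f z) - 1) * ((1 - a4) * (c^2 * (Re (f z))^2 + s^2 * (Im (f z))^2 + c^2 * s^2))"
      by (simp add: w_def)
  next
    fix w assume w: "w \<in> ellipse_domain \<xi>"
    define R where "R = (1 - a4) * (c^2 * (Re w)^2 + s^2 * (Im w)^2 + c^2 * s^2)"
    have R0: "R \<ge> 0" unfolding R_def using a4(2) by simp
    have RM: "R \<le> M2" unfolding R_def M2_def using a4(2) XE[OF w]
      by (intro mult_left_mono add_mono mult_left_mono) auto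
    have "\<bar>(q w - 1) * R\<bar> = (1 - q w) * R" using qE[OF w] R0 by (simp add: abs_mult)
    also have "\<dots> \<le> (1 - q w) * M2" using qE[OF w] RM by (intro mult_left_mono) auto
    finally show "\<bar>(q w - 1) * ((1 - a4) * (c^2 * (Re w)^2 + s^2 * (Im w)^2 + c^2 * s^2))\<bar>
        \<le> M2 * (1 - ((Re w)\<^sup>2 / (cosh \<xi>)\<^sup>2 + (Im w)\<^sup>2 / (sinh \<xi>)\<^sup>2))"
      by (simp add: R_def q_def c_def s_def mult.commute)
  qed
  have "(\<lambda>k. norm (d k) ^ 2) sums e2" using sum2 by (simp add: tcd)
  hence "(\<lambda>n. norm (d (2 * n + 2)) ^ 2) sums e2"
    using sums_mono_reindex[OF sm22, of "\<lambda>k. norm (d k) ^ 2" e2] d0 by simp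
  hence "(\<lambda>n. complex_of_real (norm (B n) ^ 2)) sums complex_of_real e2"
    by (simp only: sums_of_real_iff d2)
  hence S2: "(\<lambda>n. (B n)\<^sup>2) sums complex_of_real e2"
    using real_sq[OF Breal] by simp
  have c4: "cosh (4 * \<xi>) = K"
  proof -
    have "cosh (4 * \<xi>) = cosh (2 * (2 * \<xi>))" by simp
    also have "\<dots> = (cosh (2 * \<xi>))^2 + (sinh (2 * \<xi>))^2" by (rule cosh_double)
    finally show ?thesis unfolding sh2 ch2 K_def by (simp add: power_mult_distrib)
  qed
  have e2eq: "e2 = (sinh (2 * \<xi>)) ^ 4 / (2 * cosh (4 * \<xi>))"
  proof -
    have "e2 * (2 * K) = (2 * s * c) ^ 4"
      using cs a4(1) unfolding e2_def K_def by algebra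
    hence "e2 = (2 * s * c) ^ 4 / (2 * K)" using Kpos by (simp add: field_simps)
    thus ?thesis unfolding c4 sh2 .
  qed
  show ?thesis
    using aeven S1 S2 beta1 beta2 e2eq by (simp add: a_def B_def)
qed

end
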